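(* For every finite set $\Omega$ with $|\Omega|\ge2$ and every $\varepsilon>0$ there exist $\delta>0$ and $n_0>0$ such that for all $n>n_0$ and all $\mu,\nu\in\mathcal P(\Omega^n)$: if $D_\square(\mu,\nu)<\delta$ then $\mathcal D_1(\mathcal O_\mu,\mathcal O_\nu)<\varepsilon$.
   Context: $\mathcal P(\mathcal X)$ denotes the set of probability measures on a finite set $\mathcal X$, identified with the standard simplex with the total variation norm $\|p-q\|_{TV}=\frac12\sum_x|p(x)-q(x)|$; $\mathcal P^2(\mathcal X)$ is the set of probability measures on $\mathcal P(\mathcal X)$, and $\mathcal D_1$ denotes the Wasserstein $\ell_1$-distance on $\mathcal P^2(\mathcal X)$ (with respect to the total variation distance on $\mathcal P(\mathcal X)$). The overlap of $\sigma,\tau\in\Omega^n$ is the distribution $\rho_{\sigma,\tau}\in\mathcal P(\Omega\times\Omega)$, $\rho_{\sigma,\tau}(\omega,\omega')=\frac1n\sum_{i=1}^n\mathbf 1\{\sigma_i=\omega,\tau_i=\omega'\}$; the overlap $\mathcal O_\mu\in\mathcal P^2(\Omega\times\Omega)$ of $\mu\in\mathcal P(\Omega^n)$ is the law of $\rho_{\sigma,\tau}$ where $\sigma,\tau$ are independent samples from $\mu$. For $\mu,\nu\in\mathcal P(\Omega^n)$ let $\Gamma(\mu,\nu)$ be the set of couplings, i.e. probability measures $\gamma$ on $\Omega^n\times\Omega^n$ whose first and second marginals are $\mu$ and $\nu$. The cut metric is $D_\square(\mu,\nu)=\frac1n\min_{\gamma\in\Gamma(\mu,\nu)}\max_{I\subset[n],\,B\subset\Omega^n\times\Omega^n,\,\omega\in\Omega}\Big|\sum_{i\in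 I}\sum_{(\sigma,\tau)\in B}\gamma(\sigma,\tau)\big(\mathbf 1\{\sigma_i=\omega\}-\mathbf 1\{\tau_i=\omega\}\big)\Big|$. *)

theory Defs
  imports "HOL-Probability.Probability"
begin

text \<open>Configurations in \<Omega>^n are lists of length n over a finite type 'a (playing \<Omega>).
  A probability measure on \<Omega>^n is a pmf on lists supported on lists of length n.\<close>

definition configs :: "nat \<Rightarrow> 'a list set" where
  "configs n = {xs. length xs = n}"

definition is_meas_on :: "nat \<Rightarrow> 'a list pmf \<Rightarrow> bool" where
  "is_meas_on n \<mu> \<longleftrightarrow> set_pmf \<mu> \<subseteq> configs n"

definition couplings :: "'b pmf \<Rightarrow> 'b pmf \<Rightarrow> ('b \<times> 'b) pmf set" where
  "couplings \<mu> \<nu> = {\<gamma>. map_pmf fst \<gamma> = \<mu> \<and> map_pmf snd \<gamma> = \<nu>}"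

text \<open>Cut metric (the minimum over couplings is attained; we write the infimum).\<close>
definition cut_dist :: "nat \<Rightarrow> ('a::finite) list pmf \<Rightarrow> 'a list pmf \<Rightarrow> real" where
  "cut_dist n \<mu> \<nu> = (1 / real n) *
     Inf ((\<lambda>\<gamma>. Max ((\<lambda>(I, B, \<omega>).
              \<bar>\<Sum>i\<in>I. \<Sum>z\<in>B. pmf \<gamma> z *
                 ((if fst z ! i = \<omega> then 1 else 0) - (if snd z ! i = \<omega> then 1 else 0))\<bar>)
           ` (Pow {..<n} \<times> Pow (configs n \<times> configs n) \<times> (UNIV :: 'a set))))
          ` couplings \<mu> \<nu>)"

definition overlap :: "nat \<Rightarrow> 'a list \<Rightarrow> 'a list \<Rightarrow> ('a \<times> 'a \<Rightarrow> real)" where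
  "overlap n \<sigma> \<tau> = (\<lambda>(w, w'). real (card {i. i < n \<and> \<sigma> ! i = w \<and> \<tau> ! i = w'}) / real n)"

definition overlap_law :: "nat \<Rightarrow> 'a list pmf \<Rightarrow> ('a \<times> 'a \<Rightarrow> real) pmf" where
  "overlap_law n \<mu> = map_pmf (\<lambda>(\<sigma>, \<tau>). overlap n \<sigma> \<tau>) (pair_pmf \<mu> \<mu>)"

definition tv_dist :: "('b::finite \<Rightarrow> real) \<Rightarrow> ('b \<Rightarrow> real) \<Rightarrow> real" where
  "tv_dist p q = (1/2) * (\<Sum>x\<in>UNIV. \<bar>p x - q x\<bar>)"

text \<open>Wasserstein-1 distance (w.r.t. TV) between (discrete) laws on P(X).
  Couplings of discrete measures are discrete, so couplings as pmfs suffice.\<close>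
definition W1 :: "('b::finite \<Rightarrow> real) pmf \<Rightarrow> ('b \<Rightarrow> real) pmf \<Rightarrow> real" where
  "W1 P Q = Inf ((\<lambda>\<pi>. measure_pmf.expectation \<pi> (\<lambda>(p, q). tv_dist p q)) ` couplings P Q)"

end

theory Submission
  imports Defs
begin


lemma finite_configs: "finite (configs n :: ('a::finite) list set)"
  unfolding configs_def using finite_lists_length_eq[of "UNIV::'a set" n] by simp

lemma abs_split:
  fixes h :: "'b \<Rightarrow> real"
  assumes fin: "finite C" and B: "\<And>B. B \<subseteq> C \<Longrightarrow> \<bar>\<Sum>z\<in>B. p z * h z\<bar> \<le> c"
    and p: "\<And>z. p z \<ge> 0"
  shows "(\<Sum>z\<in>C. p z * \<bar>h z\<bar>) \<le> 2 * c"
proof -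
  define P where "P = {z\<in>C. h z \<ge> 0}"
  define N where "N = {z\<in>C. \<not> h z \<ge> 0}"
  have CPN: "C = P \<union> N" "P \<inter> N = {}" "finite P" "finite N" using fin unfolding P_def N_def by auto
  have "(\<Sum>z\<in>C. p z * \<bar>h z\<bar>) = (\<Sum>z\<in>P. p z * \<bar>h z\<bar>) + (\<Sum>z\<in>N. p z * \<bar>h z\<bar>)"
    using CPN by (simp add: sum.union_disjoint)
  also have "(\<Sum>z\<in>P. p z * \<bar>h z\<bar>) = (\<Sum>z\<in>P. p z * h z)"
    by (rule sum.cong) (auto simp: P_def)
  also have "(\<Sum>z\<in>N. p z * \<bar>h z\<bar>) = - (\<Sum>z\<in>N. p z * h z)"
    by (subst sum_negf[symmetric], rule sum.cong) (auto simp: N_def)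
  also have "(\<Sum>z\<in>P. p z * h z) \<le> c" using B[of P] by (auto simp: P_def)
  also have "- (\<Sum>z\<in>N. p z * h z) \<le> c" using B[of N] by (auto simp: N_def)
  finally show ?thesis by simp
qed

lemma double_bound:
  fixes f :: "'b \<Rightarrow> 'b \<Rightarrow> real"
  assumes fin: "finite C" and p: "\<And>z. p z \<ge> 0" and s: "(\<Sum>z\<in>C. p z) = 1"
    and b: "\<And>z2. z2 \<in> C \<Longrightarrow> (\<Sum>z1\<in>C. p z1 * \<bar>f z1 z2\<bar>) \<le> c"
  shows "(\<Sum>z1\<in>C. \<Sum>z2\<in>C. p z1 * p z2 * \<bar>f z1 z2\<bar>) \<le> c"
proof -
  have "(\<Sum>z1\<in>C. \<Sum>z2\<in>C. p z1 * p z2 * \<bar>f z1 z2\<bar>) = (\<Sum>z2\<in>C. p z2 * (\<Sum>z1\<in>C. p z1 * \<bar>f z1 z2\<bar>))"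
    by (subst sum.swap) (simp add: sum_distrib_left mult_ac)
  also have "\<dots> \<le> (\<Sum>z2\<in>C. p z2 * c)"
    by (rule sum_mono, rule mult_left_mono) (use b p in auto)
  also have "\<dots> = c" using s by (simp add: sum_distrib_right[symmetric])
  finally show ?thesis .
qed


definition dd :: "'a \<Rightarrow> 'a list \<times> 'a list \<Rightarrow> nat \<Rightarrow> real" where
  "dd w z i = (if fst z ! i = w then 1 else 0) - (if snd z ! i = w then 1 else 0)"

lemma overlap_sum: "overlap n s t (w, w') = (1 / real n) * (\<Sum>i<n. (if s ! i = w then 1 else 0) * (if t ! i = w' then 1 else 0))"
proof -
  have e: "{i. i < n \<and> s ! i = w \<and> t ! i = w'} = {i\<in>{..<n}. s ! i = w \<and> t ! i = w'}" by auto
  have "real (card {i. i < n \<and> s ! i = w \<and> t ! i = w'}) = (\<Sum>i\<in>{i\<in>{..<n}. s ! i = w \<and> t ! i = w'}. (1::real))"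
    unfolding e by (rule real_of_card)
  also have "\<dots> = (\<Sum>i<n. (if s ! i = w then 1 else 0) * (if t ! i = w' then 1 else 0))"
    by (subst sum.inter_filter, simp, rule sum.cong, simp_all)
  finally show ?thesis unfolding overlap_def by simp
qed

lemma ov_diff:
  "overlap n s s' (w, w') - overlap n t t' (w, w') =
   (1 / real n) * ((\<Sum>i\<in>{i\<in>{..<n}. s' ! i = w'}. dd w (s, t) i) + (\<Sum>i\<in>{i\<in>{..<n}. t ! i = w}. dd w' (s', t') i))"
proof -
  have "(\<Sum>i\<in>{i\<in>{..<n}. s' ! i = w'}. dd w (s, t) i) + (\<Sum>i\<in>{i\<in>{..<n}. t ! i = w}. dd w' (s', t') i)
     = (\<Sum>i<n. (if s' ! i = w' then dd w (s, t) i else 0) + (if t ! i = w then dd w' (s', t') i else 0))"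
    by (simp only: sum.inter_filter[OF finite_lessThan] sum.distrib)
  also have "\<dots> = (\<Sum>i<n. (if s ! i = w then 1 else 0) * (if s' ! i = w' then 1 else 0)
        - (if t ! i = w then 1 else 0) * (if t' ! i = w' then 1 else 0))"
    by (rule sum.cong) (auto simp: dd_def)
  finally show ?thesis unfolding overlap_sum by (simp add: sum_subtractf right_diff_distrib)
qed
lemma double_bound2:
  fixes f :: "'b \<Rightarrow> 'b \<Rightarrow> real"
  assumes fin: "finite C" and p: "\<And>z. p z \<ge> 0" and s: "(\<Sum>z\<in>C. p z) = 1"
    and b: "\<And>z1. z1 \<in> C \<Longrightarrow> (\<Sum>z2\<in>C. p z2 * \<bar>f z1 z2\<bar>) \<le> c"
  shows "(\<Sum>z1\<in>C. \<Sum>z2\<in>C. p z1 * p z2 * \<bar>f z1 z2\<bar>) \<le> c"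
proof -
  have "(\<Sum>z1\<in>C. \<Sum>z2\<in>C. p z1 * p z2 * \<bar>f z1 z2\<bar>) = (\<Sum>z2\<in>C. \<Sum>z1\<in>C. p z2 * p z1 * \<bar>(\<lambda>a b. f b a) z2 z1\<bar>)"
    by (subst sum.swap) (simp add: mult_ac)
  also have "\<dots> \<le> c" by (rule double_bound[OF fin p s]) (use b in simp)
  finally show ?thesis .
qed

lemma swap3:
  fixes a :: "'b \<Rightarrow> 'b \<Rightarrow> real"
  shows "(\<Sum>x\<in>X. \<Sum>y\<in>Y. a x y * (\<Sum>p\<in>P. f p x y)) = (\<Sum>p\<in>P. \<Sum>x\<in>X. \<Sum>y\<in>Y. a x y * f p x y)"
proof -
  have "(\<Sum>x\<in>X. \<Sum>y\<in>Y. a x y * (\<Sum>p\<in>P. f p x y)) = (\<Sum>x\<in>X. \<Sum>y\<in>Y. \<Sum>p\<in>P. a x y * f p x y)"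
    by (simp add: sum_distrib_left)
  also have "\<dots> = (\<Sum>x\<in>X. \<Sum>p\<in>P. \<Sum>y\<in>Y. a x y * f p x y)"
    by (rule sum.cong[OF refl], rule sum.swap)
  also have "\<dots> = (\<Sum>p\<in>P. \<Sum>x\<in>X. \<Sum>y\<in>Y. a x y * f p x y)"
    by (rule sum.swap)
  finally show ?thesis .
qed

theorem corollary2p8:
  assumes "CARD('a::finite) \<ge> 2" and "(\<epsilon>::real) > 0"
  shows "\<exists>\<delta>>0. \<exists>n0::nat>0. \<forall>n>n0. \<forall>\<mu> \<nu> :: 'a list pmf.
           is_meas_on n \<mu> \<longrightarrow> is_meas_on n \<nu> \<longrightarrow> cut_dist n \<mu> \<nu> < \<delta> \<longrightarrow>
           W1 (overlap_law n \<mu>) (overlap_law n \<nu>) < \<epsilon>"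
proof -
  define K where "K = real (CARD('a \<times> 'a))"
  have Kpos: "K > 0" unfolding K_def by simp
  define \<delta> where "\<delta> = \<epsilon> / (4 * K)"
  have dpos: "\<delta> > 0" using assms(2) Kpos by (simp add: \<delta>_def)
  have main: "W1 (overlap_law n \<mu>) (overlap_law n \<nu>) < \<epsilon>"
    if n1: "n > 1" and m1: "is_meas_on n \<mu>" and m2: "is_meas_on n \<nu>" and cd: "cut_dist n \<mu> \<nu> < \<delta>"
    for n and \<mu> \<nu> :: "'a list pmf"
  proof -
    have npos: "real n > 0" using n1 by simp
    define C where "C = (configs n :: 'a list set) \<times> (configs n :: 'a list set)"
    have finC: "finite C" unfolding C_def by (intro finite_cartesian_product finite_configs)
    define S where "S = Pow {..<n} \<times> Pow C \<times> (UNIV :: 'a set)"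
    have finS: "finite S" unfolding S_def using finC by simp
    define G where "G = (\<lambda>\<gamma>::('a list \<times> 'a list) pmf. Max ((\<lambda>(I, B, \<omega>).
              \<bar>\<Sum>i\<in>I. \<Sum>z\<in>B. pmf \<gamma> z *
                 ((if fst z ! i = \<omega> then 1 else 0) - (if snd z ! i = \<omega> then 1 else 0))\<bar>) ` S))"
    have "cut_dist n \<mu> \<nu> = (1 / real n) * Inf (G ` couplings \<mu> \<nu>)"
      unfolding cut_dist_def G_def S_def C_def by simp
    with cd npos have "Inf (G ` couplings \<mu> \<nu>) < real n * \<delta>"
      by (simp add: field_simps)
    moreover have "pair_pmf \<mu> \<nu> \<in> couplings \<mu> \<nu>"
      unfolding couplings_def by (simp add: map_fst_pair_pmf map_snd_pair_pmf)
    ultimately obtain \<gamma> where \<gamma>c: "\<gamma> \<in> couplings \<mu> \<nu>" and G\<gamma>: "G \<gamma> < real n * \<delta>"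
      using cInf_lessD[of "G ` couplings \<mu> \<nu>"] by blast
    have m\<mu>: "map_pmf fst \<gamma> = \<mu>" and m\<nu>: "map_pmf snd \<gamma> = \<nu>" using \<gamma>c by (auto simp: couplings_def)
    have supp: "set_pmf \<gamma> \<subseteq> C"
    proof
      fix z assume z: "z \<in> set_pmf \<gamma>"
      have "fst z \<in> set_pmf \<mu>" using z m\<mu> by force
      moreover have "snd z \<in> set_pmf \<nu>" using z m\<nu> by force
      ultimately show "z \<in> C" using m1 m2 unfolding is_meas_on_def C_def by (cases z) auto
    qed
    have sum1: "(\<Sum>z\<in>C. pmf \<gamma> z) = 1" by (rule sum_pmf_eq_1[OF finC supp])
    have cut: "\<bar>\<Sum>z\<in>B. pmf \<gamma> z * (\<Sum>i\<in>I. dd w z i)\<bar> \<le> real n * \<delta>"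
      if I: "I \<subseteq> {..<n}" and B: "B \<subseteq> C" for I B w
    proof -
      have "(\<Sum>z\<in>B. pmf \<gamma> z * (\<Sum>i\<in>I. dd w z i)) = (\<Sum>i\<in>I. \<Sum>z\<in>B. pmf \<gamma> z *
                 ((if fst z ! i = w then 1 else 0) - (if snd z ! i = w then 1 else 0)))"
        by (subst sum.swap) (simp add: sum_distrib_left dd_def)
      also have "\<bar>\<dots>\<bar> \<le> G \<gamma>" unfolding G_def
        by (rule Max_ge) (use finS I B in \<open>auto simp: S_def intro!: image_eqI[where x="(I, B, w)"]\<close>)
      finally show ?thesis using G\<gamma> by linarith
    qed
    have key: "(\<Sum>z\<in>C. pmf \<gamma> z * \<bar>\<Sum>i\<in>I. dd w z i\<bar>) \<le> 2 * (real n * \<delta>)"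
      if I: "I \<subseteq> {..<n}" for I w
      by (rule abs_split[OF finC]) (use cut I in auto)
    define g where "g = (\<lambda>(z1::'a list \<times> 'a list, z2::'a list \<times> 'a list).
         (overlap n (fst z1) (fst z2), overlap n (snd z1) (snd z2)))"
    define \<pi> where "\<pi> = map_pmf g (pair_pmf \<gamma> \<gamma>)"
    have \<pi>c: "\<pi> \<in> couplings (overlap_law n \<mu>) (overlap_law n \<nu>)"
    proof -
      have "map_pmf fst \<pi> = map_pmf (\<lambda>(a, b). overlap n a b) (map_pmf (\<lambda>(a, b). (fst a, fst b)) (pair_pmf \<gamma> \<gamma>))"
        unfolding \<pi>_def g_def by (simp add: map_pmf_comp case_prod_beta)
      also have "\<dots> = overlap_law n \<mu>" unfolding overlap_law_def map_pair m\<mu> ..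
      finally have 1: "map_pmf fst \<pi> = overlap_law n \<mu>" .
      have "map_pmf snd \<pi> = map_pmf (\<lambda>(a, b). overlap n a b) (map_pmf (\<lambda>(a, b). (snd a, snd b)) (pair_pmf \<gamma> \<gamma>))"
        unfolding \<pi>_def g_def by (simp add: map_pmf_comp case_prod_beta)
      also have "\<dots> = overlap_law n \<nu>" unfolding overlap_law_def map_pair m\<nu> ..
      finally have 2: "map_pmf snd \<pi> = overlap_law n \<nu>" .
      show ?thesis using 1 2 unfolding couplings_def by simp
    qed
    define T where "T = (\<lambda>(z1::'a list \<times> 'a list) (z2::'a list \<times> 'a list). tv_dist (overlap n (fst z1) (fst z2)) (overlap n (snd z1) (snd z2)))"
    define A where "A = (\<lambda>(p::'a\<times>'a) (z1::'a list \<times> 'a list) (z2::'a list \<times> 'a list). \<bar>\<Sum>i\<in>{i\<in>{..<n}. fst z2 ! i = snd p}. dd (fst p) z1 i\<bar>)"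
    define B where "B = (\<lambda>(p::'a\<times>'a) (z1::'a list \<times> 'a list) (z2::'a list \<times> 'a list). \<bar>\<Sum>i\<in>{i\<in>{..<n}. snd z1 ! i = fst p}. dd (snd p) z2 i\<bar>)"
    have Tle: "T z1 z2 \<le> (\<Sum>p\<in>UNIV. (1 / (2 * real n)) * (A p z1 z2 + B p z1 z2))" for z1 z2
    proof -
      have "\<bar>overlap n (fst z1) (fst z2) p - overlap n (snd z1) (snd z2) p\<bar> \<le> (1 / real n) * (A p z1 z2 + B p z1 z2)" for p
      proof -
        obtain w w' where p: "p = (w, w')" by (cases p)
        have "overlap n (fst z1) (fst z2) p - overlap n (snd z1) (snd z2) p =
          (1 / real n) * ((\<Sum>i\<in>{i\<in>{..<n}. fst z2 ! i = w'}. dd w z1 i) + (\<Sum>i\<in>{i\<in>{..<n}. snd z1 ! i = w}. dd w' z2 i))"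
          unfolding p ov_diff by simp
        also have "\<bar>\<dots>\<bar> \<le> (1 / real n) * (A p z1 z2 + B p z1 z2)"
          unfolding A_def B_def p using npos by (simp add: abs_mult) (rule divide_right_mono[OF abs_triangle_ineq], simp)
        finally show ?thesis .
      qed
      hence "T z1 z2 \<le> (1/2) * (\<Sum>p\<in>UNIV. (1 / real n) * (A p z1 z2 + B p z1 z2))"
        unfolding T_def tv_dist_def by (intro mult_left_mono sum_mono) auto
      also have "\<dots> = (\<Sum>p\<in>UNIV. (1 / (2 * real n)) * (A p z1 z2 + B p z1 z2))"
        by (simp add: sum_distrib_left)
      finally show ?thesis .
    qed
    have Abound: "(\<Sum>z1\<in>C. \<Sum>z2\<in>C. pmf \<gamma> z1 * pmf \<gamma> z2 * A p z1 z2) \<le> 2 * (real n * \<delta>)" for p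
      unfolding A_def
      by (rule double_bound[OF finC pmf_nonneg sum1])
         (rule key, auto)
    have Bbound: "(\<Sum>z1\<in>C. \<Sum>z2\<in>C. pmf \<gamma> z1 * pmf \<gamma> z2 * B p z1 z2) \<le> 2 * (real n * \<delta>)" for p
      unfolding B_def
      by (rule double_bound2[OF finC pmf_nonneg sum1])
         (rule key, auto)
    have E: "measure_pmf.expectation \<pi> (\<lambda>(p, q). tv_dist p q) = (\<Sum>z1\<in>C. \<Sum>z2\<in>C. pmf \<gamma> z1 * pmf \<gamma> z2 * T z1 z2)"
    proof -
      have "measure_pmf.expectation \<pi> (\<lambda>(p, q). tv_dist p q) =
            measure_pmf.expectation (pair_pmf \<gamma> \<gamma>) (\<lambda>x. case g x of (p, q) \<Rightarrow> tv_dist p q)"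
        unfolding \<pi>_def by simp
      also have "\<dots> = (\<Sum>x\<in>C \<times> C. pmf (pair_pmf \<gamma> \<gamma>) x *\<^sub>R (case g x of (p, q) \<Rightarrow> tv_dist p q))"
        by (rule integral_measure_pmf) (use finC supp in auto)
      also have "\<dots> = (\<Sum>(z1, z2)\<in>C \<times> C. pmf \<gamma> z1 * pmf \<gamma> z2 * T z1 z2)"
        by (rule sum.cong) (auto simp: g_def T_def pmf_pair)
      also have "\<dots> = (\<Sum>z1\<in>C. \<Sum>z2\<in>C. pmf \<gamma> z1 * pmf \<gamma> z2 * T z1 z2)"
        by (simp add: sum.cartesian_product)
      finally show ?thesis .
    qed
    have "W1 (overlap_law n \<mu>) (overlap_law n \<nu>) \<le> measure_pmf.expectation \<pi> (\<lambda>(p, q). tv_dist p q)"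
      unfolding W1_def
    proof (rule cInf_lower)
      show "measure_pmf.expectation \<pi> (\<lambda>(p, q). tv_dist p q) \<in>
        (\<lambda>\<pi>. measure_pmf.expectation \<pi> (\<lambda>(p, q). tv_dist p q)) ` couplings (overlap_law n \<mu>) (overlap_law n \<nu>)"
        using \<pi>c by blast
      have tvn: "tv_dist p q \<ge> 0" for p q :: "'a \<times> 'a \<Rightarrow> real"
        unfolding tv_dist_def by (simp add: sum_nonneg)
      show "bdd_below ((\<lambda>\<pi>. measure_pmf.expectation \<pi> (\<lambda>(p, q). tv_dist p q)) ` couplings (overlap_law n \<mu>) (overlap_law n \<nu>))"
        by (rule bdd_belowI[where m=0]) (auto intro!: Bochner_Integration.integral_nonneg simp: tvn split: prod.splits)
    qed
    also have "\<dots> \<le> (\<Sum>z1\<in>C. \<Sum>z2\<in>C. pmf \<gamma> z1 * pmf \<gamma> z2 * (\<Sum>p\<in>UNIV. (1 / (2 * real n)) * (A p z1 z2 + B p z1 z2)))"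
      unfolding E by (intro sum_mono mult_left_mono Tle) auto
    also have "\<dots> = (\<Sum>p\<in>UNIV. (1 / (2 * real n)) * ((\<Sum>z1\<in>C. \<Sum>z2\<in>C. pmf \<gamma> z1 * pmf \<gamma> z2 * A p z1 z2)
                      + (\<Sum>z1\<in>C. \<Sum>z2\<in>C. pmf \<gamma> z1 * pmf \<gamma> z2 * B p z1 z2)))"
      unfolding swap3 by (simp add: sum_distrib_left sum.distrib algebra_simps)
    also have "\<dots> \<le> (\<Sum>p\<in>(UNIV::('a\<times>'a) set). (1 / (2 * real n)) * (4 * (real n * \<delta>)))"
      proof (intro sum_mono mult_left_mono)
      fix p show "(\<Sum>z1\<in>C. \<Sum>z2\<in>C. pmf \<gamma> z1 * pmf \<gamma> z2 * A p z1 z2) + (\<Sum>z1\<in>C. \<Sum>z2\<in>C. pmf \<gamma> z1 * pmf \<gamma> z2 * B p z1 z2) \<le> 4 * (real n * \<delta>)"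
        using Abound[of p] Bbound[of p] by linarith
    qed (use npos in simp)
    also have "\<dots> = 2 * K * \<delta>" using npos by (simp add: K_def)
    also have "\<dots> < \<epsilon>" using Kpos assms(2) by (simp add: \<delta>_def)
    finally show ?thesis .
  qed
  show ?thesis
    by (rule exI[of _ \<delta>], use dpos in simp, rule exI[of _ 1], use main in auto)
qed

end
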